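(* The multiplicative GNS $s(n)=q^n-1$ on $\mathbf Z[[q-1]]$ is $\mathbf T$-Green: for all positive integers $m$ and $a,b\mid m$, with $g=\gcd(a,b)$ and $\ell=\operatorname{lcm}(a,b)$, \[ q^m-1\equiv\frac m\ell\cdot\frac{(q^a-1)(q^b-1)}{q^g-1}\bmod (q^a-1)(q^b-1). \]
   Context: A GNS over $D$ is $s\colon\mathbf N\to D$ with $s(0)=0$, $s(n)$ a non-zero-divisor for $n>0$, $s(n-k)\mid s(n)-s(k)$ for $n>k>0$. $\mathbf T$-Green means the congruence $s(m)\equiv\frac m\ell\frac{s(a)s(b)}{s(g)}\bmod s(a)s(b)$ holds for all $m\ge1$ and $a,b\mid m$. *)

theory Defs
  imports "HOL-Computational_Algebra.Formal_Power_Series"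
begin

definition GNS :: "(nat \<Rightarrow> 'a::comm_ring_1) \<Rightarrow> bool" where
  "GNS s \<longleftrightarrow> s 0 = 0
     \<and> (\<forall>n>0. \<forall>x. s n * x = 0 \<longrightarrow> x = 0)
     \<and> (\<forall>n k. 0 < k \<and> k < n \<longrightarrow> s (n - k) dvd s n - s k)"

text \<open>The quotient s a * s b / s g is expressed as the element c with
  c * s g = s a * s b (unique, as s g is a non-zero-divisor).\<close>
definition T_Green :: "(nat \<Rightarrow> 'a::comm_ring_1) \<Rightarrow> bool" where
  "T_Green s \<longleftrightarrow>
     (\<forall>m a b c. 1 \<le> m \<longrightarrow> a dvd m \<longrightarrow> b dvd m \<longrightarrow>
        c * s (gcd a b) = s a * s b \<longrightarrow>
        s a * s b dvd (s m - of_nat (m div lcm a b) * c))"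

text \<open>The ring Z[[q-1]] is int fps with q = 1 + X.\<close>
definition qnum :: "nat \<Rightarrow> int fps" where
  "qnum n = (1 + fps_X) ^ n - 1"

end

theory Submission
  imports Defs "HOL-Number_Theory.Cong"
begin

lemma pow_sub_dvd: "(y::'a::comm_ring_1) - 1 dvd y^t - 1"
  by (simp add: power_diff_1_eq)

lemma perm_bij:
  assumes "coprime u (v::nat)" "v > 0"
  shows "bij_betw (\<lambda>j. u*j mod v) {..<v} {..<v}"
proof -
  have inj: "inj_on (\<lambda>j. u*j mod v) {..<v}"
  proof (rule inj_onI)
    fix i j assume i: "i \<in> {..<v}" and j: "j \<in> {..<v}" and e: "u*i mod v = u*j mod v"
    have "[u*i = u*j] (mod v)" using e by (simp add: cong_def)
    then have "[i = j] (mod v)" using assms(1) cong_mult_lcancel_nat by blast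
    then show "i = j" using i j cong_less_imp_eq_nat by auto
  qed
  have "(\<lambda>j. u*j mod v) ` {..<v} = {..<v}"
    by (rule endo_inj_surj) (use inj assms(2) in auto)
  then show ?thesis using inj by (simp add: bij_betw_def)
qed

lemma perm_sum:
  assumes "coprime u (v::nat)" "v > 0"
  shows "(x::'a::comm_ring_1)^v - 1 dvd (\<Sum>j<v. (x^u)^j) - (\<Sum>j<v. x^j)"
proof -
  have "(\<Sum>j<v. x^j) = (\<Sum>j<v. x^(u*j mod v))"
    using sum.reindex_bij_betw[OF perm_bij[OF assms], of "\<lambda>j. x^j"] by simp
  then have eq: "(\<Sum>j<v. (x^u)^j) - (\<Sum>j<v. x^j) = (\<Sum>j<v. x^(u*j) - x^(u*j mod v))"
    by (simp add: sum_subtractf power_mult)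
  have "x^v - 1 dvd x^(u*j) - x^(u*j mod v)" for j
  proof -
    have "x^(u*j) = x^(u*j mod v) * (x^v)^(u*j div v)"
      by (metis mod_mult_div_eq power_add power_mult)
    then have "x^(u*j) - x^(u*j mod v) = x^(u*j mod v) * ((x^v)^(u*j div v) - 1)"
      by (simp add: algebra_simps)
    then show ?thesis using pow_sub_dvd by (metis dvd_mult)
  qed
  then show ?thesis unfolding eq by (simp add: dvd_sum)
qed

lemma geom_mod: "(y::'a::comm_ring_1) - 1 dvd (\<Sum>i<k. y^i) - of_nat k"
proof -
  have "(\<Sum>i<k. y^i) - of_nat k = (\<Sum>i<k. y^i - 1)" by (simp add: sum_subtractf)
  then show ?thesis by (simp only:) (rule dvd_sum, rule pow_sub_dvd)
qed

lemma coeff1: "fps_nth ((1 + fps_X :: int fps) ^ n) 1 = int n \<and> fps_nth ((1 + fps_X :: int fps) ^ n) 0 = 1"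
proof (induction n)
  case 0 then show ?case by simp
next
  case (Suc n)
  have "(1 + fps_X :: int fps) ^ Suc n = (1 + fps_X) ^ n + fps_X * (1 + fps_X) ^ n"
    by (simp add: algebra_simps)
  then show ?case using Suc by (simp add: fps_X_mult_nth)
qed

lemma qnz: "g > 0 \<Longrightarrow> (1 + fps_X :: int fps) ^ g - 1 \<noteq> 0"
proof
  assume "g > 0" "(1 + fps_X :: int fps) ^ g - 1 = 0"
  then have "fps_nth ((1 + fps_X :: int fps) ^ g - 1) 1 = 0" by simp
  then show False using coeff1[of g] \<open>g > 0\<close> by simp
qed

theorem lemma5p15:
  shows "T_Green qnum"
  unfolding T_Green_def
proof (intro allI impI)
  fix m a b :: nat and c :: "int fps"
  assume m: "1 \<le> m" and am: "a dvd m" and bm: "b dvd m"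
    and c: "c * qnum (gcd a b) = qnum a * qnum b"
  define q :: "int fps" where "q = 1 + fps_X"
  define g where "g = gcd a b"
  have a0: "a > 0" using am m by (auto intro: Nat.gr0I)
  have b0: "b > 0" using bm m by (auto intro: Nat.gr0I)
  have g0: "g > 0" using a0 g_def by simp
  obtain u where u: "a = g * u" using g_def by (metis gcd_dvd1 dvdE)
  obtain v where v: "b = g * v" using g_def by (metis gcd_dvd2 dvdE)
  have cop: "coprime u v"
  proof -
    have "g * gcd u v = gcd (g*u) (g*v)" by (rule gcd_mult_distrib_nat)
    also have "\<dots> = gcd a b" by (simp only: u[symmetric] v[symmetric])
    also have "\<dots> = g * 1" by (simp only: g_def mult_1_right)
    finally have "g * gcd u v = g * 1" .
    then have "gcd u v = 1" using g0 by (metis mult_left_cancel not_gr0)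
    then show ?thesis by (simp add: coprime_iff_gcd_eq_1)
  qed
  have v0: "v > 0" using v b0 by auto
  have l: "lcm a b = g * u * v"
  proof -
    have "lcm a b * g = a * b" unfolding g_def by (simp add: lcm_gcd_prod)
    also have "a * b = g * u * v * g" unfolding u v by (simp add: algebra_simps)
    finally have "lcm a b * g = g * u * v * g" .
    then show ?thesis using g0 by simp
  qed
  define l where "l = g * u * v"
  define k where "k = m div l"
  have lm: "l dvd m" using am bm l l_def by (metis lcm_least)
  have mk: "m = l * k" using lm k_def by simp
  define x where "x = q ^ g"
  define G where "G = x - 1"
  define P where "P = (\<Sum>i<u. x^i)"
  define Q where "Q = (\<Sum>i<v. x^i)"
  define z where "z = q ^ l"
  have A: "qnum a = G * P" unfolding qnum_def q_def[symmetric] u G_def P_def x_def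
    by (simp add: power_mult power_diff_1_eq)
  have B: "qnum b = G * Q" unfolding qnum_def q_def[symmetric] v G_def Q_def x_def
    by (simp add: power_mult power_diff_1_eq)
  have Gq: "qnum g = G" unfolding qnum_def q_def[symmetric] G_def x_def by simp
  have Gnz: "G \<noteq> 0" using qnz[OF g0] Gq unfolding qnum_def by metis
  have cc: "c = G * P * Q"
  proof -
    have "c * G = (G * P * Q) * G" using c A B Gq g_def by (simp add: algebra_simps)
    then show ?thesis using Gnz by simp
  qed
  have zx: "z = (x^u)^v" unfolding z_def x_def l_def by (simp add: power_mult)
  have zA: "qnum a dvd z - 1"
  proof -
    have "qnum a = x^u - 1" unfolding qnum_def q_def[symmetric] x_def u by (simp add: power_mult)
    then show ?thesis using zx pow_sub_dvd by metis
  qed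
  have zB: "qnum b dvd z - 1"
  proof -
    have "qnum b = x^v - 1" unfolding qnum_def q_def[symmetric] x_def v by (simp add: power_mult)
    moreover have "z = (x^v)^u" using zx by (metis mult.commute power_mult)
    ultimately show ?thesis using pow_sub_dvd by metis
  qed
  have AB2: "qnum a * qnum b dvd (z - 1) * (z - 1)" using zA zB by (rule mult_dvd_mono)
  have qm: "qnum m = (z - 1) * (\<Sum>i<k. z^i)"
    unfolding qnum_def q_def[symmetric] z_def mk by (simp add: power_mult power_diff_1_eq)
  have step1: "qnum a * qnum b dvd qnum m - of_nat k * (z - 1)"
  proof -
    obtain t where t: "(\<Sum>i<k. z^i) - of_nat k = (z - 1) * t" using geom_mod by (metis dvdE)
    have "qnum m - of_nat k * (z - 1) = (z - 1) * ((\<Sum>i<k. z^i) - of_nat k)"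
      using qm by (simp add: right_diff_distrib mult.commute)
    also have "\<dots> = (z - 1) * (z - 1) * t" using t by simp
    finally have "qnum m - of_nat k * (z - 1) = (z - 1) * (z - 1) * t" .
    then show ?thesis using AB2 by (metis dvd_mult2)
  qed
  have step2: "qnum a * qnum b dvd (z - 1) - c"
  proof -
    have "z - 1 = (x^u - 1) * (\<Sum>j<v. (x^u)^j)" using zx power_diff_1_eq by metis
    also have "x^u - 1 = G * P" unfolding G_def P_def by (simp add: power_diff_1_eq)
    finally have "z - 1 - c = G * P * ((\<Sum>j<v. (x^u)^j) - Q)" using cc by (simp add: algebra_simps)
    moreover have "x^v - 1 dvd (\<Sum>j<v. (x^u)^j) - Q" unfolding Q_def by (rule perm_sum[OF cop v0])
    moreover have "qnum a * qnum b = G * P * (x^v - 1)"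
    proof -
      have GQ: "G * Q = x^v - 1" unfolding G_def Q_def by (simp add: power_diff_1_eq)
      have "qnum a * qnum b = G * P * (G * Q)" by (simp add: A B mult_ac)
      then show ?thesis by (simp only: GQ)
    qed
    ultimately show ?thesis by (simp add: mult_dvd_mono)
  qed
  have "qnum m - of_nat (m div lcm a b) * c
        = (qnum m - of_nat k * (z - 1)) + of_nat k * ((z - 1) - c)"
    using l l_def k_def by (simp add: algebra_simps)
  moreover have "qnum a * qnum b dvd (qnum m - of_nat k * (z - 1)) + of_nat k * ((z - 1) - c)"
    using step1 step2 by (intro dvd_add dvd_mult)
  ultimately show "qnum a * qnum b dvd qnum m - of_nat (m div lcm a b) * c"
    by (simp only:)
qed

end
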